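(* Assume the L-smoothness assumption (with $L>0$), let $x^\star$ be a minimizer of $f$, $f^\star=f(x^\star)$, assume $\sigma_f^2<\infty$, and suppose $\gamma_b\le\frac1{20L\tau}$. For every $t\ge0$ let $s(t)$ be the largest multiple of $\tau$ with $s(t)\le t$. Then the FedSPS iterates satisfy $$\mathbb E R_t\le\frac1{3L\tau}\sum_{j=s(t)}^{t-1}\mathbb E[f(\bar x_j)-f^\star]+64L\gamma_b^2\tau\sum_{j=s(t)}^{t-1}\sigma_f^2,$$ where $R_t:=\frac1n\sum_{i=1}^n\|\bar x_t-x_t^i\|^2$.
   Context: Setting: integers $n\ge1$, $d\ge1$, $\tau\ge1$. For each $i\in[n]$, $\mathcal D_i$ is a probability distribution on $\Omega_i$, $F_i:\mathbb R^d\times\Omega_i\to\mathbb R$ with $F_i(\cdot,\xi)$ differentiable for $\xi\in\operatorname{supp}(\mathcal D_i)$; $f_i(x):=\mathbb E_{\xi\sim\mathcal D_i}F_i(x,\xi)$, $\mathbb E\nabla F_i(x,\xi)=\nabla f_i(x)$, $f:=\frac1n\sum_if_i$. $F_i^\star:=\inf_{\xi\in\operatorname{supp}(\mathcal D_i),x}F_i(x,\xi)$ and $\ell_i^\star\le F_i^\star$ are given reals. FedSPS with parameters $c,\gamma_b>0$: $x_0^i=x_0$; at each $t$, client $i$ draws $\xi_t^i\sim\mathcal D_i$ independently of everything else, sets $g_t^i:=\nabla F_i(x_t^i,\xi_t^i)$, $\gamma_t^i:=\min\{\frac{F_i(x_t^i,\xi_t^i)-\ell_i^\star}{c\|g_t^i\|^2},\gamma_b\}$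 (first term $+\infty$ if $g_t^i=0$); if $t+1$ is a multiple of $\tau$, $x_{t+1}^i:=\frac1n\sum_j(x_t^j-\gamma_t^jg_t^j)$ for all $i$, else $x_{t+1}^i:=x_t^i-\gamma_t^ig_t^i$. $\bar x_t:=\frac1n\sum_ix_t^i$. L-smoothness assumption: $\|\nabla F_i(y,\xi)-\nabla F_i(x,\xi)\|\le L\|x-y\|$ for all $i$, $\xi\in\operatorname{supp}(\mathcal D_i)$, $x,y$. $\sigma_f^2:=\frac1n\sum_i(f_i(x^\star)-\ell_i^\star)$. *)

theory Defs
  imports "HOL-Probability.Probability"
begin

text \<open>Clients are indexed by 0..n-1. F i x xi is the stochastic loss,
  G i x xi its gradient in x, ell i the lower bound ell_i^star.
  A sample path xi maps (t,i) to the sample drawn by client i at time t.\<close>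

definition sps_step ::
  "(nat \<Rightarrow> 'a::real_inner \<Rightarrow> 'w \<Rightarrow> real) \<Rightarrow> (nat \<Rightarrow> 'a \<Rightarrow> 'w \<Rightarrow> 'a) \<Rightarrow> (nat \<Rightarrow> real)
   \<Rightarrow> real \<Rightarrow> real \<Rightarrow> nat \<Rightarrow> 'a \<Rightarrow> 'w \<Rightarrow> real" where
  "sps_step F G ell c gb i x xi =
     (if G i x xi = 0 then gb
      else min ((F i x xi - ell i) / (c * (norm (G i x xi))\<^sup>2)) gb)"

fun fedsps ::
  "nat \<Rightarrow> nat \<Rightarrow> (nat \<Rightarrow> 'a::real_inner \<Rightarrow> 'w \<Rightarrow> real) \<Rightarrow> (nat \<Rightarrow> 'a \<Rightarrow> 'w \<Rightarrow> 'a)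
   \<Rightarrow> (nat \<Rightarrow> real) \<Rightarrow> real \<Rightarrow> real \<Rightarrow> 'a \<Rightarrow> (nat \<times> nat \<Rightarrow> 'w) \<Rightarrow> nat \<Rightarrow> nat \<Rightarrow> 'a" where
  "fedsps n tau F G ell c gb x0 xi 0 = (\<lambda>i. x0)"
| "fedsps n tau F G ell c gb x0 xi (Suc t) =
     (let x = fedsps n tau F G ell c gb x0 xi t;
          u = (\<lambda>i. x i - sps_step F G ell c gb i (x i) (xi (t, i)) *\<^sub>R G i (x i) (xi (t, i)))
      in if tau dvd Suc t then (\<lambda>i. (1 / real n) *\<^sub>R (\<Sum>j<n. u j)) else u)"

definition avg :: "nat \<Rightarrow> (nat \<Rightarrow> 'a::real_vector) \<Rightarrow> 'a" where
  "avg n x = (1 / real n) *\<^sub>R (\<Sum>i<n. x i)"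

definition consensus_dist :: "nat \<Rightarrow> (nat \<Rightarrow> 'a::real_normed_vector) \<Rightarrow> real" where
  "consensus_dist n x = (1 / real n) * (\<Sum>i<n. (norm (avg n x - x i))\<^sup>2)"

definition local_obj :: "(nat \<Rightarrow> 'w measure) \<Rightarrow> (nat \<Rightarrow> 'a \<Rightarrow> 'w \<Rightarrow> real) \<Rightarrow> nat \<Rightarrow> 'a \<Rightarrow> real" where
  "local_obj D F i x = (\<integral>xi. F i x xi \<partial>D i)"

definition global_obj :: "nat \<Rightarrow> (nat \<Rightarrow> 'w measure) \<Rightarrow> (nat \<Rightarrow> 'a \<Rightarrow> 'w \<Rightarrow> real) \<Rightarrow> 'a \<Rightarrow> real" where
  "global_obj n D F x = (1 / real n) * (\<Sum>i<n. local_obj D F i x)"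

definition sigma_f2 :: "nat \<Rightarrow> (nat \<Rightarrow> 'w measure) \<Rightarrow> (nat \<Rightarrow> 'a \<Rightarrow> 'w \<Rightarrow> real) \<Rightarrow> (nat \<Rightarrow> real) \<Rightarrow> 'a \<Rightarrow> real" where
  "sigma_f2 n D F ell xstar = (1 / real n) * (\<Sum>i<n. local_obj D F i xstar - ell i)"

definition sample_space :: "nat \<Rightarrow> (nat \<Rightarrow> 'w measure) \<Rightarrow> (nat \<times> nat \<Rightarrow> 'w) measure" where
  "sample_space n D = PiM (UNIV \<times> {..<n}) (\<lambda>(t, i). D i)"

definition last_sync :: "nat \<Rightarrow> nat \<Rightarrow> nat" where
  "last_sync tau t = (t div tau) * tau"

end

theory Submission
  imports Defs
begin

lemma descent:
  fixes phi :: "'a::real_inner \<Rightarrow> real" and g :: "'a \<Rightarrow> 'a"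
  assumes deriv: "\<And>x. (phi has_derivative (\<lambda>h. g x \<bullet> h)) (at x)"
    and lip: "\<And>x y. norm (g y - g x) \<le> L * norm (x - y)"
  shows "phi y \<le> phi x + g x \<bullet> (y - x) + L/2 * (norm (y-x))\<^sup>2"
proof -
  define d where "d = y - x"
  define h where "h s = phi (x + s *\<^sub>R d) - s * (g x \<bullet> d) - L/2 * s\<^sup>2 * (norm d)\<^sup>2" for s::real
  have "h 1 \<le> h 0"
  proof (rule DERIV_nonpos_imp_nonincreasing[of 0 1 h])
    fix s :: real assume s: "0 \<le> s" "s \<le> 1"
    have d1: "((\<lambda>s. phi (x + s *\<^sub>R d)) has_real_derivative (g (x + s *\<^sub>R d) \<bullet> d)) (at s)"
    proof -
      have "((\<lambda>s. x + s *\<^sub>R d) has_derivative (\<lambda>h. h *\<^sub>R d)) (at s)"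
        by (auto intro!: derivative_eq_intros)
      from has_derivative_compose[OF this deriv]
      have "((\<lambda>s. phi (x + s *\<^sub>R d)) has_derivative (\<lambda>h. g (x + s *\<^sub>R d) \<bullet> (h *\<^sub>R d))) (at s)" .
      moreover have "(\<lambda>h. g (x + s *\<^sub>R d) \<bullet> (h *\<^sub>R d)) = (*) (g (x + s *\<^sub>R d) \<bullet> d)"
        by (auto simp: fun_eq_iff)
      ultimately have "((\<lambda>s. phi (x + s *\<^sub>R d)) has_derivative (*) (g (x + s *\<^sub>R d) \<bullet> d)) (at s)"
        by simp
      then show ?thesis unfolding has_field_derivative_def .
    qed
    have "DERIV h s :> (g (x + s *\<^sub>R d) \<bullet> d - g x \<bullet> d - L/2 * (2 * s) * (norm d)\<^sup>2)"
      unfolding h_def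
      apply (intro derivative_eq_intros)
      apply (rule d1)
      by (auto simp: power2_eq_square)
    moreover have "g (x + s *\<^sub>R d) \<bullet> d - g x \<bullet> d - L/2 * (2 * s) * (norm d)\<^sup>2 \<le> 0"
    proof -
      have "g (x + s *\<^sub>R d) \<bullet> d - g x \<bullet> d = (g (x + s *\<^sub>R d) - g x) \<bullet> d"
        by (simp add: inner_diff_left)
      also have "\<dots> \<le> norm (g (x + s *\<^sub>R d) - g x) * norm d" by (rule norm_cauchy_schwarz)
      also have "\<dots> \<le> (L * norm (x - (x + s *\<^sub>R d))) * norm d"
        by (intro mult_right_mono lip) auto
      also have "\<dots> = L * s * (norm d)\<^sup>2" using s by (simp add: power2_eq_square)
      finally show ?thesis by simp
    qed
    ultimately show "\<exists>y. DERIV h s :> y \<and> y \<le> 0" by blast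
  qed simp
  then show ?thesis by (simp add: h_def d_def)
qed

lemma grad_bound:
  fixes phi :: "'a::real_inner \<Rightarrow> real" and g :: "'a \<Rightarrow> 'a"
  assumes deriv: "\<And>x. (phi has_derivative (\<lambda>h. g x \<bullet> h)) (at x)"
    and lip: "\<And>x y. norm (g y - g x) \<le> L * norm (x - y)"
    and lb: "\<And>x. l \<le> phi x" and L: "L > 0"
  shows "(norm (g x))\<^sup>2 \<le> 2 * L * (phi x - l)"
proof -
  define y where "y = x - (1/L) *\<^sub>R g x"
  have "l \<le> phi y" by (rule lb)
  also have "\<dots> \<le> phi x + g x \<bullet> (y - x) + L/2 * (norm (y-x))\<^sup>2" by (rule descent[OF deriv lip])
  also have "\<dots> = phi x - (norm (g x))\<^sup>2 / (2 * L)"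
    using L by (simp add: y_def power2_eq_square field_simps inner_commute norm_mult flip: power2_norm_eq_inner)
  finally show ?thesis using L by (simp add: field_simps)
qed

lemma aux_lin: "(a1::real) \<le> b1 + c1 + e1 \<Longrightarrow> c1 \<le> d1 + e1 \<Longrightarrow> d1 \<le> b1 - f1 \<Longrightarrow> a1 - f1 \<le> 2*(b1 - f1) + (e1+e1)"
    by simp

lemma shift_bound:
  fixes phi :: "'a::real_inner \<Rightarrow> real" and g :: "'a \<Rightarrow> 'a"
  assumes deriv: "\<And>x. (phi has_derivative (\<lambda>h. g x \<bullet> h)) (at x)"
    and lip: "\<And>x y. norm (g y - g x) \<le> L * norm (x - y)"
    and lb: "\<And>x. l \<le> phi x" and L: "L > 0"
  shows "phi y - l \<le> 2 * (phi x - l) + L * (norm (y - x))\<^sup>2"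
proof -
  have "phi y \<le> phi x + g x \<bullet> (y - x) + L/2 * (norm (y-x))\<^sup>2" by (rule descent[OF deriv lip])
  moreover have "g x \<bullet> (y - x) \<le> (norm (g x))\<^sup>2 / (2*L) + L/2 * (norm (y-x))\<^sup>2"
  proof -
    have "0 \<le> (norm ((1/sqrt L) *\<^sub>R g x - sqrt L *\<^sub>R (y - x)))\<^sup>2" by simp
    also have "\<dots> = (norm (g x))\<^sup>2 / L - 2 * (g x \<bullet> (y - x)) + L * (norm (y-x))\<^sup>2"
      using L unfolding power2_norm_eq_inner
      by (simp add: inner_diff_left inner_diff_right inner_commute)
    finally have "2 * (g x \<bullet> (y - x)) \<le> (norm (g x))\<^sup>2 / L + L * (norm (y-x))\<^sup>2" by linarith
    moreover have "(norm (g x))\<^sup>2 / (2*L) = ((norm (g x))\<^sup>2 / L)/2" by simp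
    ultimately show ?thesis by linarith
  qed
  moreover have "(norm (g x))\<^sup>2 \<le> 2 * L * (phi x - l)" by (rule grad_bound[OF deriv lip lb L])
  then have "(norm (g x))\<^sup>2 / (2*L) \<le> phi x - l" using L by (simp add: pos_divide_le_eq mult.commute)
  moreover have "L/2 * (norm (y-x))\<^sup>2 + L/2 * (norm (y-x))\<^sup>2 = L * (norm (y-x))\<^sup>2" by simp
  ultimately show ?thesis using aux_lin by metis
qed


definition vstep :: "(nat \<Rightarrow> 'a::real_inner \<Rightarrow> 'w \<Rightarrow> real) \<Rightarrow> (nat \<Rightarrow> 'a \<Rightarrow> 'w \<Rightarrow> 'a) \<Rightarrow> (nat \<Rightarrow> real)
   \<Rightarrow> real \<Rightarrow> real \<Rightarrow> nat \<Rightarrow> 'a \<Rightarrow> 'w \<Rightarrow> 'a" where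
  "vstep F G ell c gb i x xi = sps_step F G ell c gb i x xi *\<^sub>R G i x xi"

lemma fedsps_Suc_nd:
  "\<not> tau dvd Suc t \<Longrightarrow> fedsps n tau F G ell c gb x0 xi (Suc t) i =
     fedsps n tau F G ell c gb x0 xi t i - vstep F G ell c gb i (fedsps n tau F G ell c gb x0 xi t i) (xi (t, i))"
  by (simp add: vstep_def Let_def)

lemma fedsps_Suc_d:
  "tau dvd Suc t \<Longrightarrow> fedsps n tau F G ell c gb x0 xi (Suc t) i =
     (1 / real n) *\<^sub>R (\<Sum>j<n. fedsps n tau F G ell c gb x0 xi t j - vstep F G ell c gb j (fedsps n tau F G ell c gb x0 xi t j) (xi (t, j)))"
  by (simp add: vstep_def Let_def)

lemma fedsps_dep:
  assumes "\<forall>s<t. \<forall>i<n. xi (s,i) = xi' (s,i)" "k < n"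
  shows "fedsps n tau F G ell c gb x0 xi t k = fedsps n tau F G ell c gb x0 xi' t k"
  using assms
proof (induction t arbitrary: k)
  case 0 then show ?case by simp
next
  case (Suc t)
  have IH: "\<And>k. k < n \<Longrightarrow> fedsps n tau F G ell c gb x0 xi t k = fedsps n tau F G ell c gb x0 xi' t k"
    using Suc by auto
  show ?case
  proof (cases "tau dvd Suc t")
    case True
    show ?thesis unfolding fedsps_Suc_d[OF True]
      using IH Suc.prems by (intro arg_cong[where f="\<lambda>v. _ *\<^sub>R v"] sum.cong) auto
  next
    case False
    show ?thesis unfolding fedsps_Suc_nd[OF False]
      using IH Suc.prems by auto
  qed
qed

lemma fedsps_sync:
  assumes "tau dvd s"
  shows "fedsps n tau F G ell c gb x0 xi s i = fedsps n tau F G ell c gb x0 xi s 0"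
proof (cases s)
  case 0 then show ?thesis by simp
next
  case (Suc s') then show ?thesis using assms by (simp add: fedsps_Suc_d del: fedsps.simps)
qed

lemma fedsps_local:
  assumes "tau dvd s" "d < tau"
  shows "fedsps n tau F G ell c gb x0 xi (s + d) i = fedsps n tau F G ell c gb x0 xi s i
     - (\<Sum>j\<in>{s..<s+d}. vstep F G ell c gb i (fedsps n tau F G ell c gb x0 xi j i) (xi (j, i)))"
  using assms(2)
proof (induction d)
  case 0 then show ?case by simp
next
  case (Suc d)
  have nd: "\<not> tau dvd Suc (s + d)"
  proof
    assume "tau dvd Suc (s + d)"
    then have "tau dvd s + Suc d" by simp
    then have "tau dvd Suc d" using assms(1) dvd_add_right_iff by blast
    then show False using Suc.prems by (auto dest: dvd_imp_le)
  qed
  show ?case using Suc nd by (simp add: fedsps_Suc_nd del: fedsps.simps)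
qed

lemma avg_var:
  fixes x :: "nat \<Rightarrow> 'a::real_inner"
  assumes "n \<ge> 1"
  shows "consensus_dist n x \<le> (1 / real n) * (\<Sum>i<n. (norm (x i - c))\<^sup>2)"
proof -
  define a where "a = avg n x"
  have sa: "(\<Sum>i<n. x i - a) = 0"
    using assms by (simp add: a_def avg_def sum_subtractf sum_constant_scaleR)
  have "(\<Sum>i<n. (norm (x i - c))\<^sup>2) = (\<Sum>i<n. (norm (x i - a))\<^sup>2 + 2 * ((x i - a) \<bullet> (a - c)) + (norm (a - c))\<^sup>2)"
  proof (rule sum.cong)
    fix i
    have "x i - c = (x i - a) + (a - c)" by simp
    then show "(norm (x i - c))\<^sup>2 = (norm (x i - a))\<^sup>2 + 2 * ((x i - a) \<bullet> (a - c)) + (norm (a - c))\<^sup>2"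
      by (metis power2_norm_eq_inner inner_add_left inner_add_right inner_commute mult_2 add.assoc)
  qed simp
  also have "\<dots> = (\<Sum>i<n. (norm (x i - a))\<^sup>2) + 2 * ((\<Sum>i<n. x i - a) \<bullet> (a - c)) + real n * (norm (a - c))\<^sup>2"
    by (simp add: sum.distrib sum_distrib_left inner_sum_left)
  finally have "(\<Sum>i<n. (norm (x i - a))\<^sup>2) \<le> (\<Sum>i<n. (norm (x i - c))\<^sup>2)"
    using sa by simp
  moreover have "(\<Sum>i<n. (norm (x i - a))\<^sup>2) = (\<Sum>i<n. (norm (a - x i))\<^sup>2)"
    by (simp add: norm_minus_commute)
  ultimately show ?thesis unfolding consensus_dist_def a_def[symmetric]
    by (simp add: divide_right_mono)
qed

lemma norm_sum_sq:
  fixes v :: "nat \<Rightarrow> 'a::real_normed_vector"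
  assumes "finite S"
  shows "(norm (\<Sum>j\<in>S. v j))\<^sup>2 \<le> real (card S) * (\<Sum>j\<in>S. (norm (v j))\<^sup>2)"
proof -
  have "(norm (\<Sum>j\<in>S. v j))\<^sup>2 \<le> (\<Sum>j\<in>S. norm (v j))\<^sup>2"
    by (intro power_mono norm_sum) auto
  also have "\<dots> \<le> (\<Sum>j\<in>S. (norm (v j))\<^sup>2) * card S" by (rule sum_squared_le_sum_of_squares)
  finally show ?thesis by (simp add: mult.commute)
qed



definition good :: "(nat \<Rightarrow> 'a::real_inner \<Rightarrow> 'w \<Rightarrow> real) \<Rightarrow> (nat \<Rightarrow> 'a \<Rightarrow> 'w \<Rightarrow> 'a) \<Rightarrow> (nat \<Rightarrow> real) \<Rightarrow> real \<Rightarrow> nat \<Rightarrow> 'w \<Rightarrow> bool" where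
  "good F G ell L i xi \<longleftrightarrow> (\<forall>x. ell i \<le> F i x xi) \<and> (\<forall>x y. norm (G i y xi - G i x xi) \<le> L * norm (x - y))
     \<and> (\<forall>x. ((\<lambda>y. F i y xi) has_derivative (\<lambda>h. G i x xi \<bullet> h)) (at x))"

lemma sps_step_bounds:
  assumes "\<forall>x. ell i \<le> F i x xi" "c > 0" "gb > 0"
  shows "0 \<le> sps_step F G ell c gb i x xi" "sps_step F G ell c gb i x xi \<le> gb"
  using assms unfolding sps_step_def
  by (auto intro!: divide_nonneg_pos simp: min_def)

lemma vstep_bound:
  assumes g: "good F G ell L i xi" and c: "c > 0" and gb: "gb > 0" and L: "L > 0"
  shows "(norm (vstep F G ell c gb i x xi))\<^sup>2 \<le> 2 * L * gb\<^sup>2 * (F i x xi - ell i)"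
proof -
  let ?s = "sps_step F G ell c gb i x xi"
  have lb: "\<forall>x. ell i \<le> F i x xi" using g by (simp add: good_def)
  have s: "0 \<le> ?s" "?s \<le> gb" using sps_step_bounds[of ell i F xi c gb G x] lb c gb by auto
  have "(norm (vstep F G ell c gb i x xi))\<^sup>2 = ?s\<^sup>2 * (norm (G i x xi))\<^sup>2"
    by (simp add: vstep_def power_mult_distrib)
  also have "\<dots> \<le> gb\<^sup>2 * (norm (G i x xi))\<^sup>2"
    using s by (intro mult_right_mono power_mono) auto
  also have "\<dots> \<le> gb\<^sup>2 * (2 * L * (F i x xi - ell i))"
    using g L by (intro mult_left_mono grad_bound[where phi="\<lambda>y. F i y xi" and g="\<lambda>y. G i y xi"]) (auto simp: good_def)
  finally show ?thesis by (simp add: algebra_simps)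
qed

lemma shift_good:
  assumes g: "good F G ell L i xi" and L: "L > 0"
  shows "F i y xi - ell i \<le> 2 * (F i x xi - ell i) + L * (norm (y - x))\<^sup>2"
  using g L by (intro shift_bound[where phi="\<lambda>y. F i y xi" and g="\<lambda>y. G i y xi"]) (auto simp: good_def)

locale fs =
  fixes n tau :: nat and F :: "nat \<Rightarrow> 'a::real_inner \<Rightarrow> 'w \<Rightarrow> real" and G :: "nat \<Rightarrow> 'a \<Rightarrow> 'w \<Rightarrow> 'a"
    and ell :: "nat \<Rightarrow> real" and c gb L :: real and x0 :: 'a
  assumes n: "n \<ge> 1" and tau: "tau \<ge> 1" and L: "L > 0" and c: "c > 0" and gb: "gb > 0"
begin

abbreviation X where "X xi t \<equiv> fedsps n tau F G ell c gb x0 xi t"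

lemma pathwise:
  assumes gd: "\<forall>j<t. \<forall>i<n. good F G ell L i (xi (j,i))"
  shows "consensus_dist n (X xi t) \<le> (\<Sum>j\<in>{last_sync tau t..<t}.
      (4*L*gb\<^sup>2*tau/n) * (\<Sum>i<n. F i (avg n (X xi j)) (xi(j,i)) - ell i) + 2*L\<^sup>2*gb\<^sup>2*tau * consensus_dist n (X xi j))"
proof -
  define s where "s = last_sync tau t"
  define d where "d = t mod tau"
  have ts: "t = s + d" by (simp add: s_def d_def last_sync_def)
  have dvd: "tau dvd s" by (simp add: s_def last_sync_def)
  have dlt: "d < tau" using tau by (simp add: d_def)
  have cardS: "card {s..<t} = d" using ts by simp
  let ?v = "\<lambda>j i. vstep F G ell c gb i (X xi j i) (xi (j, i))"
  define T where "T j i = 2 * (F i (avg n (X xi j)) (xi(j,i)) - ell i) + L * (norm (X xi j i - avg n (X xi j)))\<^sup>2" for j i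
  have gji: "good F G ell L i (xi (j,i))" if "j \<in> {s..<t}" "i < n" for j i
    using gd that by auto
  have vT: "(norm (?v j i))\<^sup>2 \<le> 2 * L * gb\<^sup>2 * T j i" if "j \<in> {s..<t}" "i < n" for j i
  proof -
    have "(norm (?v j i))\<^sup>2 \<le> 2 * L * gb\<^sup>2 * (F i (X xi j i) (xi (j,i)) - ell i)"
      by (rule vstep_bound[OF gji[OF that] c gb L])
    also have "\<dots> \<le> 2 * L * gb\<^sup>2 * T j i" unfolding T_def
      using L by (intro mult_left_mono shift_good[OF gji[OF that] L]) auto
    finally show ?thesis .
  qed
  have Tnn: "0 \<le> T j i" if "j \<in> {s..<t}" "i < n" for j i
    using gji[OF that] L unfolding T_def good_def by (auto intro!: add_nonneg_nonneg)
  have "consensus_dist n (X xi t) \<le> (1 / real n) * (\<Sum>i<n. (norm (X xi t i - X xi s 0))\<^sup>2)"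
    by (rule avg_var[OF n])
  also have "\<dots> = (1 / real n) * (\<Sum>i<n. (norm (\<Sum>j\<in>{s..<t}. ?v j i))\<^sup>2)"
  proof -
    have "X xi t i - X xi s 0 = - (\<Sum>j\<in>{s..<t}. ?v j i)" for i
      using fedsps_local[OF dvd dlt, of n F G ell c gb x0 xi i] fedsps_sync[OF dvd, of n F G ell c gb x0 xi i]
      by (simp add: ts)
    then show ?thesis by (simp only: norm_minus_cancel)
  qed
  also have "\<dots> \<le> (1 / real n) * (\<Sum>i<n. real tau * (\<Sum>j\<in>{s..<t}. 2 * L * gb\<^sup>2 * T j i))"
  proof (intro mult_left_mono sum_mono)
    fix i assume i: "i \<in> {..<n}"
    have "(norm (\<Sum>j\<in>{s..<t}. ?v j i))\<^sup>2 \<le> real d * (\<Sum>j\<in>{s..<t}. (norm (?v j i))\<^sup>2)"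
      using norm_sum_sq[of "{s..<t}"] cardS by simp
    also have "\<dots> \<le> real tau * (\<Sum>j\<in>{s..<t}. 2 * L * gb\<^sup>2 * T j i)"
      using dlt i vT Tnn L by (intro mult_mono sum_mono sum_nonneg) auto
    finally show "(norm (\<Sum>j\<in>{s..<t}. ?v j i))\<^sup>2 \<le> real tau * (\<Sum>j\<in>{s..<t}. 2 * L * gb\<^sup>2 * T j i)" .
  qed simp
  also have "\<dots> = (\<Sum>j\<in>{s..<t}.
      (4*L*gb\<^sup>2*tau/n) * (\<Sum>i<n. F i (avg n (X xi j)) (xi(j,i)) - ell i) + 2*L\<^sup>2*gb\<^sup>2*tau * consensus_dist n (X xi j))"
    unfolding T_def consensus_dist_def
    by (simp add: sum_distrib_left sum.distrib sum_subtractf norm_minus_commute algebra_simps power2_eq_square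
        sum.swap[of _ "{..<n}" "{s..<t}"] sum_divide_distrib sum_distrib_right)
  finally show ?thesis by (simp add: s_def)
qed

end


lemma pps: "(\<And>p. prob_space (M p)) \<Longrightarrow> product_prob_space M"
  unfolding product_prob_space_def product_sigma_finite_def product_prob_space_axioms_def
  by (auto intro: prob_space_imp_sigma_finite)

lemma transfer:
  assumes pp: "\<And>p. prob_space (M p)" and J: "finite J" "J \<subseteq> I" and g: "g \<in> borel_measurable (PiM J M)"
    and eq: "\<And>\<omega>. \<omega> \<in> space (PiM I M) \<Longrightarrow> h \<omega> = g (restrict \<omega> J)"
  shows "(\<integral>\<^sup>+\<omega>. h \<omega> \<partial>PiM I M) = (\<integral>\<^sup>+\<omega>. g \<omega> \<partial>PiM J M)"
proof -
  interpret product_prob_space M I by (rule pps[OF pp])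
  have "(\<integral>\<^sup>+\<omega>. h \<omega> \<partial>PiM I M) = (\<integral>\<^sup>+\<omega>. g (restrict \<omega> J) \<partial>PiM I M)"
    by (rule nn_integral_cong) (simp add: eq)
  also have "\<dots> = (\<integral>\<^sup>+\<omega>. g \<omega> \<partial>distr (PiM I M) (PiM J M) (\<lambda>x. restrict x J))"
    by (rule nn_integral_distr[symmetric]) (auto intro!: measurable_restrict_subset J g simp del: restrict_apply)
  also have "\<dots> = (\<integral>\<^sup>+\<omega>. g \<omega> \<partial>PiM J M)"
    by (simp add: distr_PiM_restrict_finite J)
  finally show ?thesis .
qed

lemma meas_vstep:
  fixes F :: "nat \<Rightarrow> 'a::euclidean_space \<Rightarrow> 'w \<Rightarrow> real" and G :: "nat \<Rightarrow> 'a \<Rightarrow> 'w \<Rightarrow> 'a"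
  assumes y: "y \<in> borel_measurable N" and e: "e \<in> measurable N (D i)"
    and Fm: "(\<lambda>(x, xi). F i x xi) \<in> borel_measurable (borel \<Otimes>\<^sub>M D i)"
    and Gm: "(\<lambda>(x, xi). G i x xi) \<in> borel_measurable (borel \<Otimes>\<^sub>M D i)"
  shows "(\<lambda>\<omega>. F i (y \<omega>) (e \<omega>)) \<in> borel_measurable N"
    and "(\<lambda>\<omega>. G i (y \<omega>) (e \<omega>)) \<in> borel_measurable N"
    and "(\<lambda>\<omega>. vstep F G ell c gb i (y \<omega>) (e \<omega>)) \<in> borel_measurable N"
proof -
  have pm: "(\<lambda>\<omega>. (y \<omega>, e \<omega>)) \<in> measurable N (borel \<Otimes>\<^sub>M D i)"
    using y e by (rule measurable_Pair)
  show f[measurable]: "(\<lambda>\<omega>. F i (y \<omega>) (e \<omega>)) \<in> borel_measurable N"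
    using measurable_comp[OF pm Fm] by (simp add: comp_def)
  show g[measurable]: "(\<lambda>\<omega>. G i (y \<omega>) (e \<omega>)) \<in> borel_measurable N"
    using measurable_comp[OF pm Gm] by (simp add: comp_def)
  show "(\<lambda>\<omega>. vstep F G ell c gb i (y \<omega>) (e \<omega>)) \<in> borel_measurable N"
    unfolding vstep_def sps_step_def by measurable
qed



definition Dn :: "nat \<Rightarrow> (nat \<Rightarrow> 'w measure) \<Rightarrow> nat \<Rightarrow> 'w measure" where
  "Dn n D i = (if i < n then D i else return (count_space UNIV) undefined)"

definition Mp :: "nat \<Rightarrow> (nat \<Rightarrow> 'w measure) \<Rightarrow> nat \<times> nat \<Rightarrow> 'w measure" where
  "Mp n D p = Dn n D (snd p)"

lemma Mp_prob: "\<forall>i<n. prob_space (D i) \<Longrightarrow> prob_space (Mp n D p)"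
  by (auto simp: Mp_def Dn_def intro!: prob_space_return)

lemma sample_space_Mp: "sample_space n D = PiM (UNIV \<times> {..<n}) (Mp n D)"
  unfolding sample_space_def by (rule PiM_cong) (auto simp: Mp_def Dn_def)

lemma comp_meas: "(t,i) \<in> K \<Longrightarrow> i < n \<Longrightarrow> (\<lambda>\<omega>. \<omega> (t,i)) \<in> measurable (PiM K (Mp n D)) (D i)"
  using measurable_component_singleton[of "(t,i)" K "Mp n D"] by (simp add: Mp_def Dn_def)

lemma meas_X:
  fixes F :: "nat \<Rightarrow> 'a::euclidean_space \<Rightarrow> 'w \<Rightarrow> real" and G :: "nat \<Rightarrow> 'a \<Rightarrow> 'w \<Rightarrow> 'a"
  assumes measF: "\<forall>i<n. (\<lambda>(x, xi). F i x xi) \<in> borel_measurable (borel \<Otimes>\<^sub>M D i)"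
    and measG: "\<forall>i<n. (\<lambda>(x, xi). G i x xi) \<in> borel_measurable (borel \<Otimes>\<^sub>M D i)"
    and K: "{..<t} \<times> {..<n} \<subseteq> K" and k: "k < n"
  shows "(\<lambda>\<omega>. fedsps n tau F G ell c gb x0 \<omega> t k) \<in> borel_measurable (PiM K (Mp n D))"
  using K k
proof (induction t arbitrary: k)
  case 0 then show ?case by simp
next
  case (Suc t)
  have u: "(\<lambda>\<omega>. fedsps n tau F G ell c gb x0 \<omega> t j - vstep F G ell c gb j (fedsps n tau F G ell c gb x0 \<omega> t j) (\<omega> (t, j)))
      \<in> borel_measurable (PiM K (Mp n D))" if j: "j < n" for j
  proof -
    have y: "(\<lambda>\<omega>. fedsps n tau F G ell c gb x0 \<omega> t j) \<in> borel_measurable (PiM K (Mp n D))"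
    proof (rule Suc.IH[OF _ j])
      show "{..<t} \<times> {..<n} \<subseteq> K" using Suc.prems(1) by auto
    qed
    have e: "(\<lambda>\<omega>. \<omega> (t,j)) \<in> measurable (PiM K (Mp n D)) (D j)"
      using Suc j by (intro comp_meas) auto
    show ?thesis
      using meas_vstep(3)[where D=D and i=j and F=F and G=G and ell=ell and c=c and gb=gb, OF y e] measF measG j y by (intro borel_measurable_diff) auto
  qed
  show ?case
  proof (cases "tau dvd Suc t")
    case True
    show ?thesis unfolding fedsps_Suc_d[OF True]
      using u by (intro borel_measurable_scaleR borel_measurable_sum) auto
  next
    case False
    show ?thesis unfolding fedsps_Suc_nd[OF False]
      using u Suc.prems by auto
  qed
qed



lemma inner_int:
  assumes P: "prob_space M" and I: "integrable M (f :: 'w \<Rightarrow> real)" and lb: "AE xi in M. l \<le> f xi"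
  shows "(\<integral>\<^sup>+xi. ennreal (f xi - l) \<partial>M) = ennreal ((\<integral>xi. f xi \<partial>M) - l)"
proof -
  interpret prob_space M by (rule P)
  have "(\<integral>\<^sup>+xi. ennreal (f xi - l) \<partial>M) = ennreal (\<integral>xi. f xi - l \<partial>M)"
    using I lb by (intro nn_integral_eq_integral) auto
  also have "(\<integral>xi. f xi - l \<partial>M) = (\<integral>xi. f xi \<partial>M) - l"
    using I by (subst Bochner_Integration.integral_diff) (auto simp: prob_space)
  finally show ?thesis .
qed

lemma meas_avg:
  fixes x :: "'b \<Rightarrow> nat \<Rightarrow> 'a::euclidean_space"
  assumes "\<And>k. k < n \<Longrightarrow> (\<lambda>\<omega>. x \<omega> k) \<in> borel_measurable N"
  shows "(\<lambda>\<omega>. avg n (x \<omega>)) \<in> borel_measurable N"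
proof -
  have "(\<lambda>\<omega>. \<Sum>k<n. x \<omega> k) \<in> borel_measurable N" using borel_measurable_sum[of "{..<n}" "\<lambda>k \<omega>. x \<omega> k"] assms by simp
  then show ?thesis unfolding avg_def by (intro borel_measurable_scaleR) auto
qed

lemma meas_cd:
  fixes x :: "'b \<Rightarrow> nat \<Rightarrow> 'a::euclidean_space"
  assumes "\<And>k. k < n \<Longrightarrow> (\<lambda>\<omega>. x \<omega> k) \<in> borel_measurable N"
  shows "(\<lambda>\<omega>. consensus_dist n (x \<omega>)) \<in> borel_measurable N"
proof -
  have a[measurable]: "(\<lambda>\<omega>. avg n (x \<omega>)) \<in> borel_measurable N" by (rule meas_avg[OF assms])
  have "(\<lambda>\<omega>. norm (avg n (x \<omega>) - x \<omega> k)) \<in> borel_measurable N" if "k < n" for k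
    using measurable_comp[OF borel_measurable_diff[OF a assms[OF that]] borel_measurable_norm] by (simp add: comp_def)
  then have "(\<lambda>\<omega>. \<Sum>k<n. (norm (avg n (x \<omega>) - x \<omega> k))\<^sup>2) \<in> borel_measurable N"
    by (intro borel_measurable_sum borel_measurable_power) auto
  then show ?thesis unfolding consensus_dist_def by (intro borel_measurable_times) auto
qed

lemma fedsps_avg_dep:
  assumes "\<forall>s<t. \<forall>i<n. xi (s,i) = xi' (s,i)"
  shows "avg n (fedsps n tau F G ell c gb x0 xi t) = avg n (fedsps n tau F G ell c gb x0 xi' t)"
  unfolding avg_def using fedsps_dep[OF assms] by (intro arg_cong[where f="\<lambda>v. _ *\<^sub>R v"] sum.cong) auto

lemma fedsps_cd_dep:
  assumes "\<forall>s<t. \<forall>i<n. xi (s,i) = xi' (s,i)"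
  shows "consensus_dist n (fedsps n tau F G ell c gb x0 xi t) = consensus_dist n (fedsps n tau F G ell c gb x0 xi' t)"
proof -
  have "(norm (avg n (fedsps n tau F G ell c gb x0 xi t) - fedsps n tau F G ell c gb x0 xi t k))
      = (norm (avg n (fedsps n tau F G ell c gb x0 xi' t) - fedsps n tau F G ell c gb x0 xi' t k))" if "k < n" for k
    using fedsps_dep[OF assms that, of tau F G ell c gb x0] fedsps_avg_dep[OF assms, of tau F G ell c gb x0] by simp
  then show ?thesis unfolding consensus_dist_def by (intro arg_cong[where f="\<lambda>v. _ * v"] sum.cong) auto
qed

lemma indep:
  fixes F :: "nat \<Rightarrow> 'a::euclidean_space \<Rightarrow> 'w \<Rightarrow> real" and G :: "nat \<Rightarrow> 'a \<Rightarrow> 'w \<Rightarrow> 'a"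
  assumes prob: "\<forall>i<n. prob_space (D i)"
    and measF: "\<forall>i<n. (\<lambda>(x, xi). F i x xi) \<in> borel_measurable (borel \<Otimes>\<^sub>M D i)"
    and measG: "\<forall>i<n. (\<lambda>(x, xi). G i x xi) \<in> borel_measurable (borel \<Otimes>\<^sub>M D i)"
    and intF: "\<forall>i<n. \<forall>x. integrable (D i) (F i x)"
    and lower: "\<forall>i<n. AE xi in D i. \<forall>x. ell i \<le> F i x xi"
    and unbiased: "\<forall>i<n. \<forall>x. (local_obj D F i has_derivative (\<lambda>h. (\<integral>xi. G i x xi \<partial>D i) \<bullet> h)) (at x)"
    and i: "i < n"
  shows "(\<integral>\<^sup>+\<omega>. ennreal (F i (avg n (fedsps n tau F G ell c gb x0 \<omega> j)) (\<omega> (j,i)) - ell i) \<partial>sample_space n D)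
       = (\<integral>\<^sup>+\<omega>. ennreal (local_obj D F i (avg n (fedsps n tau F G ell c gb x0 \<omega> j)) - ell i) \<partial>sample_space n D)"
proof -
  let ?M = "Mp n D"
  let ?I = "UNIV \<times> {..<n}"
  let ?X = "\<lambda>\<omega>. avg n (fedsps n tau F G ell c gb x0 \<omega> j)"
  define Kj where "Kj = {..<j} \<times> {..<n}"
  define a where "a = (j, i)"
  define K where "K = insert a Kj"
  have pp: "\<And>p. prob_space (?M p)" using prob by (rule Mp_prob)
  interpret psf: product_prob_space ?M ?I by (rule pps[OF pp])
  have finKj: "finite Kj" by (simp add: Kj_def)
  have aKj: "a \<notin> Kj" by (simp add: a_def Kj_def)
  have Xm: "?X \<in> borel_measurable (PiM K' ?M)" if "Kj \<subseteq> K'" for K'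
    by (rule meas_avg, rule meas_X[OF measF measG]) (use that in \<open>auto simp: Kj_def\<close>)
  define phi where "phi \<omega> = ennreal (F i (?X \<omega>) (\<omega> a) - ell i)" for \<omega>
  have phim: "phi \<in> borel_measurable (PiM K ?M)"
  proof -
    have "(\<lambda>\<omega>. F i (?X \<omega>) (\<omega> a)) \<in> borel_measurable (PiM K ?M)"
      using meas_vstep(1)[where D=D and i=i and F=F and G=G, OF Xm[of K] comp_meas[of j i K n D]] measF measG i
      by (auto simp: K_def a_def)
    then show ?thesis unfolding phi_def by measurable
  qed
  define psi where "psi \<omega> = ennreal (local_obj D F i (?X \<omega>) - ell i)" for \<omega>
  have lom: "local_obj D F i \<in> borel_measurable borel"
  proof (rule borel_measurable_continuous_onI, rule continuous_at_imp_continuous_on, intro ballI)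
    fix x show "isCont (local_obj D F i) x"
      using unbiased i by (auto intro: has_derivative_continuous)
  qed
  have psim: "psi \<in> borel_measurable (PiM Kj ?M)"
    unfolding psi_def using measurable_comp[OF Xm[OF order_refl] lom] by (simp add: comp_def)
  have "(\<integral>\<^sup>+\<omega>. phi \<omega> \<partial>PiM ?I ?M) = (\<integral>\<^sup>+\<omega>. phi \<omega> \<partial>PiM K ?M)"
  proof (rule transfer[OF pp _ _ phim])
    show "finite K" using finKj by (simp add: K_def)
    show "K \<subseteq> ?I" using i by (auto simp: K_def Kj_def a_def)
    fix \<omega> assume "\<omega> \<in> space (PiM ?I ?M)"
    have "?X \<omega> = ?X (restrict \<omega> K)"
      by (rule fedsps_avg_dep) (auto simp: K_def Kj_def)
    moreover have "restrict \<omega> K a = \<omega> a" by (simp add: K_def)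
    ultimately show "phi \<omega> = phi (restrict \<omega> K)" by (simp add: phi_def)
  qed
  also have "\<dots> = (\<integral>\<^sup>+x. (\<integral>\<^sup>+y. phi (x(a := y)) \<partial>?M a) \<partial>PiM Kj ?M)"
    unfolding K_def by (rule psf.product_nn_integral_insert[OF finKj aKj]) (use phim in \<open>simp add: K_def\<close>)
  also have "\<dots> = (\<integral>\<^sup>+x. psi x \<partial>PiM Kj ?M)"
  proof (rule nn_integral_cong)
    fix x
    have "(\<integral>\<^sup>+y. phi (x(a := y)) \<partial>?M a) = (\<integral>\<^sup>+y. ennreal (F i (?X x) y - ell i) \<partial>D i)"
    proof -
      have "phi (x(a := y)) = ennreal (F i (?X x) y - ell i)" for y
      proof -
        have "?X (x(a := y)) = ?X x" by (rule fedsps_avg_dep) (auto simp: a_def)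
        then show ?thesis by (simp add: phi_def)
      qed
      moreover have "?M a = D i" using i by (simp add: Mp_def Dn_def a_def)
      ultimately show ?thesis by simp
    qed
    also have "\<dots> = psi x" unfolding psi_def local_obj_def
      using prob intF lower i by (intro inner_int) auto
    finally show "(\<integral>\<^sup>+y. phi (x(a := y)) \<partial>?M a) = psi x" .
  qed
  also have "\<dots> = (\<integral>\<^sup>+\<omega>. psi \<omega> \<partial>PiM ?I ?M)"
  proof (rule transfer[OF pp finKj _ psim, symmetric])
    show "Kj \<subseteq> ?I" by (auto simp: Kj_def)
    fix \<omega> assume "\<omega> \<in> space (PiM ?I ?M)"
    have "?X \<omega> = ?X (restrict \<omega> Kj)"
      by (rule fedsps_avg_dep) (auto simp: Kj_def)
    then show "psi \<omega> = psi (restrict \<omega> Kj)" by (simp add: psi_def)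
  qed
  finally show ?thesis by (simp add: sample_space_Mp phi_def psi_def a_def)
qed

lemma AE_good:
  fixes F :: "nat \<Rightarrow> 'a::euclidean_space \<Rightarrow> 'w \<Rightarrow> real" and G :: "nat \<Rightarrow> 'a \<Rightarrow> 'w \<Rightarrow> 'a"
  assumes prob: "\<forall>i<n. prob_space (D i)"
    and diffF: "\<forall>i<n. AE xi in D i. \<forall>x. ((\<lambda>y. F i y xi) has_derivative (\<lambda>h. G i x xi \<bullet> h)) (at x)"
    and lower: "\<forall>i<n. AE xi in D i. \<forall>x. ell i \<le> F i x xi"
    and smooth: "\<forall>i<n. AE xi in D i. \<forall>x y. norm (G i y xi - G i x xi) \<le> L * norm (x - y)"
  shows "AE \<omega> in sample_space n D. \<forall>j<t. \<forall>i<n. good F G ell L i (\<omega> (j,i))"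
proof -
  let ?M = "Mp n D"
  let ?I = "UNIV \<times> {..<n}"
  have pp: "\<And>p. prob_space (?M p)" using prob by (rule Mp_prob)
  interpret pps: product_prob_space ?M ?I by (rule pps[OF pp])
  have g1: "AE xi in D i. good F G ell L i xi" if "i < n" for i
    using diffF lower smooth that unfolding good_def by auto
  have "AE \<omega> in PiM ?I ?M. \<forall>p\<in>{..<t} \<times> {..<n}. good F G ell L (snd p) (\<omega> p)"
  proof (rule eventually_ball_finite, simp, intro ballI)
    fix p assume p: "p \<in> {..<t} \<times> {..<n}"
    have eq: "?M p = D (snd p)" using p by (auto simp: Mp_def Dn_def)
    have "AE xi in D (snd p). good F G ell L (snd p) xi" using p by (intro g1) auto
    then have "AE xi in ?M p. good F G ell L (snd p) xi" by (simp only: eq)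
    then show "AE \<omega> in PiM ?I ?M. good F G ell L (snd p) (\<omega> p)"
      using p by (intro pps.AE_component) auto
  qed
  then show ?thesis unfolding sample_space_Mp by (rule AE_mp) auto
qed



lemma last_sync_in:
  assumes "j \<in> {last_sync tau t..<t}" "tau \<ge> 1"
  shows "last_sync tau j = last_sync tau t"
proof -
  have "t div tau \<le> j div tau"
    using assms div_le_mono[of "t div tau * tau" j tau] by (simp add: last_sync_def)
  moreover have "j div tau \<le> t div tau" using assms by (intro div_le_mono) auto
  ultimately show ?thesis by (simp add: last_sync_def)
qed

lemma last_sync_le: "last_sync tau t \<le> t" "tau \<ge> 1 \<Longrightarrow> t - last_sync tau t < tau"
  by (auto simp: last_sync_def minus_div_mult_eq_mod)

lemma recur:
  fixes R E :: "nat \<Rightarrow> ennreal" and a b B :: real and tau :: nat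
  assumes step: "\<And>t. R t \<le> (\<Sum>j\<in>{last_sync tau t..<t}. ennreal a * E j + ennreal b + ennreal B * R j)"
    and a: "a \<ge> 0" and b: "b \<ge> 0" and B: "B \<ge> 0" and BT: "2 * B * tau \<le> 1" and tau: "tau \<ge> 1"
  shows "R t \<le> 2 * (ennreal a * (\<Sum>j\<in>{last_sync tau t..<t}. E j) + ennreal (b * (t - last_sync tau t)))"
proof (induction t rule: less_induct)
  case (less t)
  define s where "s = last_sync tau t"
  define Q where "Q = ennreal a * (\<Sum>j\<in>{s..<t}. E j) + ennreal (b * (t - s))"
  have Rj: "R j \<le> 2 * Q" if j: "j \<in> {s..<t}" for j
  proof -
    have ls: "last_sync tau j = s" using last_sync_in[OF _ tau] j by (simp add: s_def)
    have "R j \<le> 2 * (ennreal a * (\<Sum>j\<in>{s..<j}. E j) + ennreal (b * (j - s)))"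
      using less.IH[of j] j ls by auto
    also have "\<dots> \<le> 2 * Q" unfolding Q_def
      using j b by (intro mult_left_mono add_mono sum_mono2 ennreal_leI mult_left_mono) auto
    finally show ?thesis .
  qed
  have "R t \<le> (\<Sum>j\<in>{s..<t}. ennreal a * E j + ennreal b + ennreal B * R j)"
    using step[of t] by (simp add: s_def)
  also have "\<dots> = ennreal a * (\<Sum>j\<in>{s..<t}. E j) + (\<Sum>j\<in>{s..<t}. ennreal b) + (\<Sum>j\<in>{s..<t}. ennreal B * R j)"
    by (simp add: sum.distrib sum_distrib_left)
  also have "(\<Sum>j\<in>{s..<t}. ennreal b) = ennreal (b * (t - s))"
    using b by (simp add: ennreal_mult' ennreal_of_nat_eq_real_of_nat) (rule mult.commute)
  also have "(\<Sum>j\<in>{s..<t}. ennreal B * R j) \<le> (\<Sum>j\<in>{s..<t}. ennreal B * (2 * Q))"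
    using Rj by (intro sum_mono mult_left_mono) auto
  also have "\<dots> = ennreal (real (t - s) * B * 2) * Q"
    using B by (simp add: ennreal_mult' ennreal_of_nat_eq_real_of_nat mult_ac)
  also have "\<dots> \<le> 1 * Q"
  proof (intro mult_right_mono)
    have "real (t - s) \<le> tau" using last_sync_le(2)[OF tau, of t] by (simp add: s_def)
    then have "real (t - s) * B * 2 \<le> real tau * B * 2" using B by (intro mult_right_mono) auto
    moreover have "real tau * B * 2 = 2 * B * tau" by (simp add: mult_ac)
    ultimately have "real (t - s) * B * 2 \<le> 1" using BT by linarith
    then show "ennreal (real (t - s) * B * 2) \<le> 1" by (simp add: ennreal_le_1)
  qed simp
  finally have "R t \<le> Q + Q" by (simp add: Q_def add.assoc)
  then show ?case unfolding mult_2 Q_def s_def .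
qed



context
  fixes F :: "nat \<Rightarrow> 'a::euclidean_space \<Rightarrow> 'w \<Rightarrow> real"
    and G :: "nat \<Rightarrow> 'a \<Rightarrow> 'w \<Rightarrow> 'a"
    and D :: "nat \<Rightarrow> 'w measure"
    and ell :: "nat \<Rightarrow> real"
    and L c gb :: real and x0 xstar :: 'a and n tau :: nat
  assumes n_pos: "n \<ge> 1" and tau_pos: "tau \<ge> 1"
    and L_pos: "L > 0" and c_pos: "c > 0" and gb_pos: "gb > 0"
    and prob: "\<forall>i<n. prob_space (D i)"
    and measF: "\<forall>i<n. (\<lambda>(x, xi). F i x xi) \<in> borel_measurable (borel \<Otimes>\<^sub>M D i)"
    and measG: "\<forall>i<n. (\<lambda>(x, xi). G i x xi) \<in> borel_measurable (borel \<Otimes>\<^sub>M D i)"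
    and intF: "\<forall>i<n. \<forall>x. integrable (D i) (F i x)"
    and diffF: "\<forall>i<n. AE xi in D i. \<forall>x. ((\<lambda>y. F i y xi) has_derivative (\<lambda>h. G i x xi \<bullet> h)) (at x)"
    and unbiased: "\<forall>i<n. \<forall>x. (local_obj D F i has_derivative (\<lambda>h. (\<integral>xi. G i x xi \<partial>D i) \<bullet> h)) (at x)"
    and lower: "\<forall>i<n. AE xi in D i. \<forall>x. ell i \<le> F i x xi"
    and smooth: "\<forall>i<n. AE xi in D i. \<forall>x y. norm (G i y xi - G i x xi) \<le> L * norm (x - y)"
    and minimizer: "\<forall>x. global_obj n D F xstar \<le> global_obj n D F x"
begin

abbreviation "\<Omega> \<equiv> sample_space n D"
abbreviation "XX \<omega> t \<equiv> fedsps n tau F G ell c gb x0 \<omega> t"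

lemma lo_nonneg: "i < n \<Longrightarrow> ell i \<le> local_obj D F i x"
  unfolding local_obj_def using prob intF lower
  by (intro prob_space.integral_ge_const) (auto elim!: AE_mp)

lemma lom: "i < n \<Longrightarrow> local_obj D F i \<in> borel_measurable borel"
proof (rule borel_measurable_continuous_onI, rule continuous_at_imp_continuous_on, intro ballI)
  fix x assume "i < n" then show "isCont (local_obj D F i) x"
    using unbiased by (auto intro: has_derivative_continuous)
qed

lemma Omega_prob: "prob_space \<Omega>"
proof -
  have pp: "\<And>p. prob_space (Mp n D p)" using prob by (rule Mp_prob)
  interpret product_prob_space "Mp n D" "UNIV \<times> {..<n}" by (rule pps[OF pp])
  show ?thesis unfolding sample_space_Mp by (rule P.prob_space_axioms)
qed

lemma Xm: "k < n \<Longrightarrow> (\<lambda>\<omega>. XX \<omega> t k) \<in> borel_measurable \<Omega>"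
  unfolding sample_space_Mp by (rule meas_X[OF measF measG]) auto

lemma avgm: "(\<lambda>\<omega>. avg n (XX \<omega> t)) \<in> borel_measurable \<Omega>"
  by (rule meas_avg) (rule Xm)

lemma cdm: "(\<lambda>\<omega>. consensus_dist n (XX \<omega> t)) \<in> borel_measurable \<Omega>"
  by (rule meas_cd) (rule Xm)

lemma Pm: "i < n \<Longrightarrow> (\<lambda>\<omega>. F i (avg n (XX \<omega> j)) (\<omega> (j,i))) \<in> borel_measurable \<Omega>"
  unfolding sample_space_Mp
  using meas_vstep(1)[where D=D and i=i and F=F and G=G, OF avgm[unfolded sample_space_Mp] comp_meas[of j i _ n D]] measF measG
  by auto

lemma lobm: "i < n \<Longrightarrow> (\<lambda>\<omega>. local_obj D F i (avg n (XX \<omega> j))) \<in> borel_measurable \<Omega>"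
  using measurable_comp[OF avgm lom] by (simp add: comp_def)

lemma sum_id: "(\<Sum>i<n. local_obj D F i x - ell i) = real n * (global_obj n D F x - global_obj n D F xstar) + real n * sigma_f2 n D F ell xstar"
  using n_pos unfolding global_obj_def sigma_f2_def
  by (simp add: sum_subtractf algebra_simps)

abbreviation "RR j \<equiv> \<integral>\<^sup>+\<omega>. ennreal (consensus_dist n (XX \<omega> j)) \<partial>\<Omega>"
abbreviation "EE j \<equiv> \<integral>\<^sup>+\<omega>. ennreal (global_obj n D F (avg n (XX \<omega> j)) - global_obj n D F xstar) \<partial>\<Omega>"
abbreviation "sig \<equiv> sigma_f2 n D F ell xstar"

lemma sig_nn: "0 \<le> sig"
  unfolding sigma_f2_def using lo_nonneg by (auto intro!: divide_nonneg_nonneg sum_nonneg)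

lemma cd_nn: "0 \<le> consensus_dist n x"
  unfolding consensus_dist_def by (auto intro!: divide_nonneg_nonneg sum_nonneg)

lemma per_j:
  "ennreal (4*L*gb\<^sup>2*tau/n) * (\<Sum>i<n. \<integral>\<^sup>+\<omega>. ennreal (F i (avg n (XX \<omega> j)) (\<omega> (j,i)) - ell i) \<partial>\<Omega>)
    = ennreal (4*L*gb\<^sup>2*tau) * EE j + ennreal (4*L*gb\<^sup>2*tau * sig)"
proof -
  let ?D = "\<lambda>\<omega>. global_obj n D F (avg n (XX \<omega> j)) - global_obj n D F xstar"
  interpret O: prob_space \<Omega> by (rule Omega_prob)
  have "(\<Sum>i<n. \<integral>\<^sup>+\<omega>. ennreal (F i (avg n (XX \<omega> j)) (\<omega> (j,i)) - ell i) \<partial>\<Omega>)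
      = (\<Sum>i<n. \<integral>\<^sup>+\<omega>. ennreal (local_obj D F i (avg n (XX \<omega> j)) - ell i) \<partial>\<Omega>)"
    by (intro sum.cong refl indep[OF prob measF measG intF lower unbiased]) auto
  also have "\<dots> = (\<integral>\<^sup>+\<omega>. (\<Sum>i<n. ennreal (local_obj D F i (avg n (XX \<omega> j)) - ell i)) \<partial>\<Omega>)"
    by (rule nn_integral_sum[symmetric]) (use lobm in measurable)
  also have "\<dots> = (\<integral>\<^sup>+\<omega>. ennreal (real n) * ennreal (?D \<omega>) + ennreal (real n * sig) \<partial>\<Omega>)"
  proof (rule nn_integral_cong)
    fix \<omega>
    have "(\<Sum>i<n. ennreal (local_obj D F i (avg n (XX \<omega> j)) - ell i))
        = ennreal (\<Sum>i<n. local_obj D F i (avg n (XX \<omega> j)) - ell i)"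
      using lo_nonneg by (intro sum_ennreal) auto
    also have "\<dots> = ennreal (real n * ?D \<omega> + real n * sig)" by (simp add: sum_id)
    also have "\<dots> = ennreal (real n) * ennreal (?D \<omega>) + ennreal (real n * sig)"
      using minimizer sig_nn by (simp add: ennreal_mult)
    finally show "(\<Sum>i<n. ennreal (local_obj D F i (avg n (XX \<omega> j)) - ell i))
        = ennreal (real n) * ennreal (?D \<omega>) + ennreal (real n * sig)" .
  qed
  also have "\<dots> = ennreal (real n) * EE j + ennreal (real n * sig)"
  proof -
    have m: "(\<lambda>\<omega>. ennreal (?D \<omega>)) \<in> borel_measurable \<Omega>"
    proof -
      have "(\<lambda>\<omega>. \<Sum>i<n. local_obj D F i (avg n (XX \<omega> j))) \<in> borel_measurable \<Omega>"
        using lobm by (intro borel_measurable_sum) auto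
      then show ?thesis unfolding global_obj_def by measurable
    qed
    show ?thesis
      using m by (simp add: nn_integral_add nn_integral_cmult nn_integral_const O.emeasure_space_1)
  qed
  finally have eq: "(\<Sum>i<n. \<integral>\<^sup>+\<omega>. ennreal (F i (avg n (XX \<omega> j)) (\<omega> (j,i)) - ell i) \<partial>\<Omega>)
      = ennreal (real n) * EE j + ennreal (real n * sig)" .
  have n0: "real n > 0" using n_pos by simp
  have an: "4*L*gb\<^sup>2*tau/n * real n = 4*L*gb\<^sup>2*tau" using n0 by simp
  have nn: "0 \<le> 4*L*gb\<^sup>2*tau/n" using L_pos by simp
  show ?thesis unfolding eq
    using an nn n0 sig_nn
    by (simp add: distrib_left ennreal_mult[symmetric] mult.assoc[symmetric] del: ennreal_mult)
qed

lemma step_claim: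
  "RR t \<le> (\<Sum>j\<in>{last_sync tau t..<t}. ennreal (4*L*gb\<^sup>2*tau) * EE j + ennreal (4*L*gb\<^sup>2*tau * sig)
       + ennreal (2*L\<^sup>2*gb\<^sup>2*tau) * RR j)"
proof -
  interpret fs n tau F G ell c gb L x0 using n_pos tau_pos L_pos c_pos gb_pos by unfold_locales
  define s where "s = last_sync tau t"
  define A where "A = 4*L*gb\<^sup>2*tau/n"
  define B where "B = 2*L\<^sup>2*gb\<^sup>2*tau"
  have A0: "0 \<le> A" using L_pos by (simp add: A_def)
  have B0: "0 \<le> B" by (simp add: B_def)
  let ?P = "\<lambda>\<omega> j i. F i (avg n (XX \<omega> j)) (\<omega> (j,i)) - ell i"
  have "AE \<omega> in \<Omega>. ennreal (consensus_dist n (XX \<omega> t)) \<le>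
      (\<Sum>j\<in>{s..<t}. ennreal A * (\<Sum>i<n. ennreal (?P \<omega> j i)) + ennreal B * ennreal (consensus_dist n (XX \<omega> j)))"
    using AE_good[OF prob diffF lower smooth, of t]
  proof (rule AE_mp, intro AE_I2 impI)
    fix \<omega> assume g: "\<forall>j<t. \<forall>i<n. good F G ell L i (\<omega> (j,i))"
    have Pnn: "0 \<le> ?P \<omega> j i" if "j < t" "i < n" for j i
      using g that unfolding good_def by auto
    have "consensus_dist n (XX \<omega> t) \<le> (\<Sum>j\<in>{s..<t}. A * (\<Sum>i<n. ?P \<omega> j i) + B * consensus_dist n (XX \<omega> j))"
      using pathwise[OF g] by (simp add: A_def B_def s_def)
    then have "ennreal (consensus_dist n (XX \<omega> t)) \<le> ennreal (\<Sum>j\<in>{s..<t}. A * (\<Sum>i<n. ?P \<omega> j i) + B * consensus_dist n (XX \<omega> j))"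
      by (rule ennreal_leI)
    also have "\<dots> = (\<Sum>j\<in>{s..<t}. ennreal (A * (\<Sum>i<n. ?P \<omega> j i) + B * consensus_dist n (XX \<omega> j)))"
      using Pnn A0 B0 cd_nn s_def last_sync_le(1)
      by (intro sum_ennreal[symmetric] add_nonneg_nonneg mult_nonneg_nonneg sum_nonneg) auto
    also have "\<dots> = (\<Sum>j\<in>{s..<t}. ennreal A * (\<Sum>i<n. ennreal (?P \<omega> j i)) + ennreal B * ennreal (consensus_dist n (XX \<omega> j)))"
    proof (rule sum.cong[OF refl])
      fix j assume j: "j \<in> {s..<t}"
      have S: "(\<Sum>i<n. ennreal (?P \<omega> j i)) = ennreal (\<Sum>i<n. ?P \<omega> j i)"
        using Pnn j by (intro sum_ennreal) auto
      have S0: "0 \<le> (\<Sum>i<n. ?P \<omega> j i)" using Pnn j by (intro sum_nonneg) auto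
      show "ennreal (A * (\<Sum>i<n. ?P \<omega> j i) + B * consensus_dist n (XX \<omega> j))
         = ennreal A * (\<Sum>i<n. ennreal (?P \<omega> j i)) + ennreal B * ennreal (consensus_dist n (XX \<omega> j))"
      proof -
        have h1: "0 \<le> A * (\<Sum>i<n. ?P \<omega> j i)" using A0 S0 by simp
        have h2: "0 \<le> B * consensus_dist n (XX \<omega> j)" using B0 cd_nn[of "XX \<omega> j"] by simp
        show ?thesis unfolding S ennreal_plus[OF h1 h2] ennreal_mult[OF A0 S0] ennreal_mult[OF B0 cd_nn] ..
      qed
    qed
    finally show "ennreal (consensus_dist n (XX \<omega> t)) \<le>
      (\<Sum>j\<in>{s..<t}. ennreal A * (\<Sum>i<n. ennreal (?P \<omega> j i)) + ennreal B * ennreal (consensus_dist n (XX \<omega> j)))" .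
  qed
  then have "RR t \<le> (\<integral>\<^sup>+\<omega>. (\<Sum>j\<in>{s..<t}. ennreal A * (\<Sum>i<n. ennreal (?P \<omega> j i)) + ennreal B * ennreal (consensus_dist n (XX \<omega> j))) \<partial>\<Omega>)"
    by (rule nn_integral_mono_AE)
  also have "\<dots> = (\<Sum>j\<in>{s..<t}. ennreal A * (\<Sum>i<n. \<integral>\<^sup>+\<omega>. ennreal (?P \<omega> j i) \<partial>\<Omega>) + ennreal B * RR j)"
  proof -
    have Pm': "(\<lambda>\<omega>. ennreal (?P \<omega> j i)) \<in> borel_measurable \<Omega>" if "i < n" for i j
      using Pm[OF that, of j] by measurable
    have cm: "(\<lambda>\<omega>. ennreal (consensus_dist n (XX \<omega> j))) \<in> borel_measurable \<Omega>" for j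
      using cdm[of j] by measurable
    have "(\<integral>\<^sup>+\<omega>. (\<Sum>j\<in>{s..<t}. ennreal A * (\<Sum>i<n. ennreal (?P \<omega> j i)) + ennreal B * ennreal (consensus_dist n (XX \<omega> j))) \<partial>\<Omega>)
        = (\<Sum>j\<in>{s..<t}. \<integral>\<^sup>+\<omega>. ennreal A * (\<Sum>i<n. ennreal (?P \<omega> j i)) + ennreal B * ennreal (consensus_dist n (XX \<omega> j)) \<partial>\<Omega>)"
      using Pm' cm by (intro nn_integral_sum borel_measurable_add borel_measurable_times_ennreal borel_measurable_sum borel_measurable_const) auto
    also have "\<dots> = (\<Sum>j\<in>{s..<t}. ennreal A * (\<Sum>i<n. \<integral>\<^sup>+\<omega>. ennreal (?P \<omega> j i) \<partial>\<Omega>) + ennreal B * RR j)"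
    proof (rule sum.cong[OF refl])
      fix j
      have "(\<integral>\<^sup>+\<omega>. ennreal A * (\<Sum>i<n. ennreal (?P \<omega> j i)) + ennreal B * ennreal (consensus_dist n (XX \<omega> j)) \<partial>\<Omega>)
          = (\<integral>\<^sup>+\<omega>. ennreal A * (\<Sum>i<n. ennreal (?P \<omega> j i)) \<partial>\<Omega>) + (\<integral>\<^sup>+\<omega>. ennreal B * ennreal (consensus_dist n (XX \<omega> j)) \<partial>\<Omega>)"
        using Pm' cm by (intro nn_integral_add borel_measurable_add borel_measurable_times_ennreal borel_measurable_sum borel_measurable_const) auto
      also have "\<dots> = ennreal A * (\<integral>\<^sup>+\<omega>. (\<Sum>i<n. ennreal (?P \<omega> j i)) \<partial>\<Omega>) + ennreal B * RR j"
        using Pm' cm by (subst nn_integral_cmult, (intro borel_measurable_sum; auto)?)+ auto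
      also have "(\<integral>\<^sup>+\<omega>. (\<Sum>i<n. ennreal (?P \<omega> j i)) \<partial>\<Omega>) = (\<Sum>i<n. \<integral>\<^sup>+\<omega>. ennreal (?P \<omega> j i) \<partial>\<Omega>)"
        using Pm' by (intro nn_integral_sum) auto
      finally show "(\<integral>\<^sup>+\<omega>. ennreal A * (\<Sum>i<n. ennreal (?P \<omega> j i)) + ennreal B * ennreal (consensus_dist n (XX \<omega> j)) \<partial>\<Omega>)
          = ennreal A * (\<Sum>i<n. \<integral>\<^sup>+\<omega>. ennreal (?P \<omega> j i) \<partial>\<Omega>) + ennreal B * RR j" .
    qed
    finally show ?thesis .
  qed
  also have "\<dots> = (\<Sum>j\<in>{s..<t}. ennreal (4*L*gb\<^sup>2*tau) * EE j + ennreal (4*L*gb\<^sup>2*tau * sig) + ennreal B * RR j)"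
    unfolding A_def by (intro sum.cong refl) (simp only: per_j)
  finally show ?thesis by (simp add: s_def B_def)
qed

end

theorem mainTheorem10:
  fixes F :: "nat \<Rightarrow> 'a::euclidean_space \<Rightarrow> 'w \<Rightarrow> real"
    and G :: "nat \<Rightarrow> 'a \<Rightarrow> 'w \<Rightarrow> 'a"
    and D :: "nat \<Rightarrow> 'w measure"
    and ell :: "nat \<Rightarrow> real"
    and L c gb :: real and x0 xstar :: 'a and n tau t :: nat
  assumes n_pos: "n \<ge> 1" and tau_pos: "tau \<ge> 1"
    and L_pos: "L > 0" and c_pos: "c > 0" and gb_pos: "gb > 0"
    and prob: "\<forall>i<n. prob_space (D i)"
    and measF: "\<forall>i<n. (\<lambda>(x, xi). F i x xi) \<in> borel_measurable (borel \<Otimes>\<^sub>M D i)"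
    and measG: "\<forall>i<n. (\<lambda>(x, xi). G i x xi) \<in> borel_measurable (borel \<Otimes>\<^sub>M D i)"
    and intF: "\<forall>i<n. \<forall>x. integrable (D i) (F i x)"
    and intG: "\<forall>i<n. \<forall>x. integrable (D i) (G i x)"
    and diffF: "\<forall>i<n. AE xi in D i. \<forall>x. ((\<lambda>y. F i y xi) has_derivative (\<lambda>h. G i x xi \<bullet> h)) (at x)"
    and unbiased: "\<forall>i<n. \<forall>x. (local_obj D F i has_derivative (\<lambda>h. (\<integral>xi. G i x xi \<partial>D i) \<bullet> h)) (at x)"
    and lower: "\<forall>i<n. AE xi in D i. \<forall>x. ell i \<le> F i x xi"
    and smooth: "\<forall>i<n. AE xi in D i. \<forall>x y. norm (G i y xi - G i x xi) \<le> L * norm (x - y)"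
    and minimizer: "\<forall>x. global_obj n D F xstar \<le> global_obj n D F x"
    and gb_le: "gb \<le> 1 / (20 * L * real tau)"
  shows "(\<integral>\<^sup>+ xi. ennreal (consensus_dist n (fedsps n tau F G ell c gb x0 xi t)) \<partial>sample_space n D)
     \<le> ennreal (1 / (3 * L * real tau)) *
         (\<Sum>j\<in>{last_sync tau t..<t}.
            \<integral>\<^sup>+ xi. ennreal (global_obj n D F (avg n (fedsps n tau F G ell c gb x0 xi j))
                              - global_obj n D F xstar) \<partial>sample_space n D)
       + ennreal (64 * L * gb\<^sup>2 * real tau * (\<Sum>j\<in>{last_sync tau t..<t}. sigma_f2 n D F ell xstar))"

proof -
  define a where "a = 4*L*gb\<^sup>2*tau"
  define B where "B = 2*L\<^sup>2*gb\<^sup>2*tau"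
  define sg where "sg = sigma_f2 n D F ell xstar"
  define s where "s = last_sync tau t"
  let ?RR = "\<lambda>j. \<integral>\<^sup>+\<omega>. ennreal (consensus_dist n (fedsps n tau F G ell c gb x0 \<omega> j)) \<partial>sample_space n D"
  let ?EE = "\<lambda>j. \<integral>\<^sup>+\<omega>. ennreal (global_obj n D F (avg n (fedsps n tau F G ell c gb x0 \<omega> j)) - global_obj n D F xstar) \<partial>sample_space n D"
  note ctx = n_pos tau_pos L_pos c_pos gb_pos prob measF measG intF diffF unbiased lower smooth minimizer
  have sg0: "0 \<le> sg" unfolding sg_def by (rule sig_nn[OF ctx])
  have a0: "0 \<le> a" using L_pos by (simp add: a_def)
  have B0: "0 \<le> B" by (simp add: B_def)
  have q: "gb * L * tau \<le> 1/20"
  proof -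
    have "gb * (20 * L * real tau) \<le> 1" using gb_le L_pos tau_pos by (simp add: le_divide_eq)
    then show ?thesis by (simp add: field_simps)
  qed
  have q0: "0 \<le> gb * L * tau" using gb_pos L_pos by simp
  have qq: "(gb * L * tau)\<^sup>2 \<le> (1/20)\<^sup>2" by (rule power_mono[OF q q0])
  have BT: "2 * B * tau \<le> 1"
  proof -
    have e: "2 * B * tau = 4 * (gb * L * tau)\<^sup>2" by (simp add: B_def power2_eq_square)
    have "4 * (gb * L * tau)\<^sup>2 \<le> 1" using qq by (simp add: power_divide)
    then show ?thesis using e by linarith
  qed
  have step: "\<And>t. ?RR t \<le> (\<Sum>j\<in>{last_sync tau t..<t}. ennreal a * ?EE j + ennreal (a * sg) + ennreal B * ?RR j)"
    unfolding a_def B_def sg_def by (rule step_claim[OF ctx])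
  have "?RR t \<le> 2 * (ennreal a * (\<Sum>j\<in>{last_sync tau t..<t}. ?EE j) + ennreal (a * sg * (t - last_sync tau t)))"
    by (rule recur[OF step a0 mult_nonneg_nonneg[OF a0 sg0] B0 BT tau_pos])
  also have "\<dots> = ennreal (2 * a) * (\<Sum>j\<in>{s..<t}. ?EE j) + ennreal (2 * (a * sg * (t - s)))"
    using a0 sg0 by (simp add: distrib_left ennreal_mult mult.assoc s_def)
  also have "\<dots> \<le> ennreal (1 / (3 * L * real tau)) * (\<Sum>j\<in>{s..<t}. ?EE j)
       + ennreal (64 * L * gb\<^sup>2 * real tau * (\<Sum>j\<in>{s..<t}. sg))"
  proof (intro add_mono mult_right_mono ennreal_leI)
    have "2 * a = 8 * (gb * L * tau)\<^sup>2 / (L * tau)" using L_pos tau_pos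
      by (simp add: a_def power2_eq_square field_simps)
    also have "\<dots> \<le> 8 * (1/20)\<^sup>2 / (L * tau)" using qq L_pos tau_pos
      by (intro divide_right_mono mult_left_mono) auto
    also have "\<dots> \<le> 1 / (3 * L * real tau)" using L_pos tau_pos by (simp add: field_simps)
    finally show "2 * a \<le> 1 / (3 * L * real tau)" .
    show "2 * (a * sg * real (t - s)) \<le> 64 * L * gb\<^sup>2 * real tau * (\<Sum>j\<in>{s..<t}. sg)"
    proof -
      define X where "X = L*gb\<^sup>2*real tau*(real (t-s) * sg)"
      have X0: "0 \<le> X" using L_pos sg0 by (simp add: X_def)
      have e1: "2 * (a * sg * real (t - s)) = 8 * X" by (simp add: a_def X_def mult_ac)
      have e2: "64 * L * gb\<^sup>2 * real tau * (\<Sum>j\<in>{s..<t}. sg) = 64 * X" by (simp add: X_def mult_ac)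
      show ?thesis using X0 e1 e2 by linarith
    qed
  qed simp
  finally show ?thesis by (simp add: s_def sg_def)
qed


end
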